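(* Let $M(n)$ denote the maximum of $\sigma_2(G)$ over all connected graphs $G$ with $n$ vertices. Then $M(n)=\frac{n^4}{32}+O(n^3)$ as $n\to\infty$.
   Context: All graphs are finite, simple, undirected. For a connected graph $G$ and $u\in V(G)$, the eccentricity $\varepsilon_G(u)=\max_{v\in V(G)} d_G(u,v)$, where $d_G$ is the shortest-path distance. The second Zagreb eccentricity index is $\sigma_2(G)=\sum_{uv\in E(G)}\varepsilon_G(u)\varepsilon_G(v)$. *)

theory Defs
  imports Main "HOL-Library.Landau_Symbols"
begin

definition simple_graph :: "nat \<Rightarrow> (nat \<Rightarrow> nat \<Rightarrow> bool) \<Rightarrow> bool" where
  "simple_graph n E \<longleftrightarrow> (\<forall>u v. E u v \<longrightarrow> u < n \<and> v < n \<and> u \<noteq> v \<and> E v u)"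

definition adj_rel :: "(nat \<Rightarrow> nat \<Rightarrow> bool) \<Rightarrow> (nat \<times> nat) set" where
  "adj_rel E = {(u, v). E u v}"

definition connected_graph :: "nat \<Rightarrow> (nat \<Rightarrow> nat \<Rightarrow> bool) \<Rightarrow> bool" where
  "connected_graph n E \<longleftrightarrow> simple_graph n E \<and>
     (\<forall>u v. u < n \<longrightarrow> v < n \<longrightarrow> (u, v) \<in> (adj_rel E)\<^sup>*)"

definition gdist :: "(nat \<Rightarrow> nat \<Rightarrow> bool) \<Rightarrow> nat \<Rightarrow> nat \<Rightarrow> nat" where
  "gdist E u v = (LEAST k. (u, v) \<in> adj_rel E ^^ k)"

definition ecc :: "nat \<Rightarrow> (nat \<Rightarrow> nat \<Rightarrow> bool) \<Rightarrow> nat \<Rightarrow> nat" where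
  "ecc n E u = Max {gdist E u v | v. v < n}"

definition sigma2 :: "nat \<Rightarrow> (nat \<Rightarrow> nat \<Rightarrow> bool) \<Rightarrow> nat" where
  "sigma2 n E = (\<Sum>(u, v) \<in> {(u, v). u < v \<and> v < n \<and> E u v}. ecc n E u * ecc n E v)"

definition M :: "nat \<Rightarrow> nat" where
  "M n = Max {sigma2 n E | E. connected_graph n E}"

end

theory Submission
  imports Defs
begin

lemma gdist_le: "(u,v) \<in> adj_rel E ^^ k \<Longrightarrow> gdist E u v \<le> k"
  unfolding gdist_def by (rule Least_le)

lemma gdist_path:
  assumes "connected_graph n E" "u < n" "v < n"
  shows "(u,v) \<in> adj_rel E ^^ gdist E u v"
proof -
  have "(u,v) \<in> (adj_rel E)\<^sup>*" using assms unfolding connected_graph_def by blast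
  then obtain k where "(u,v) \<in> adj_rel E ^^ k" using rtrancl_power by blast
  then show ?thesis unfolding gdist_def by (rule LeastI)
qed

lemma gdist_edge:
  assumes "connected_graph n E" "a < n" "x < n" "E x y"
  shows "gdist E a y \<le> gdist E a x + 1"
proof -
  have "(a,x) \<in> adj_rel E ^^ gdist E a x" using gdist_path assms by blast
  moreover have "(x,y) \<in> adj_rel E" using assms(4) by (simp add: adj_rel_def)
  ultimately have "(a,y) \<in> adj_rel E ^^ Suc (gdist E a x)" by (rule relpow_Suc_I)
  then show ?thesis using gdist_le by fastforce
qed

lemma layer_nonempty:
  assumes conn: "connected_graph n E" and "a < n" "b < n" "j \<le> gdist E a b"
  shows "\<exists>c<n. gdist E a c = j"
proof -
  define m where "m = gdist E a b"
  have "(a,b) \<in> adj_rel E ^^ (j + (m - j))" using gdist_path[OF assms(1-3)] assms(4) m_def by simp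
  then obtain c where c1: "(a,c) \<in> adj_rel E ^^ j" and c2: "(c,b) \<in> adj_rel E ^^ (m - j)"
    unfolding relpow_add by blast
  have cn: "c < n"
  proof (cases j)
    case 0 then show ?thesis using c1 assms(2) by simp
  next
    case (Suc j')
    then obtain z where "(z,c) \<in> adj_rel E" using c1 relpow_Suc_E by metis
    then show ?thesis using conn unfolding connected_graph_def simple_graph_def adj_rel_def by blast
  qed
  have "gdist E a c \<le> j" using gdist_le c1 by blast
  moreover have "\<not> gdist E a c < j"
  proof
    assume lt: "gdist E a c < j"
    have "(a,c) \<in> adj_rel E ^^ gdist E a c" using gdist_path[OF conn assms(2) cn] .
    with c2 have "(a,b) \<in> adj_rel E ^^ (gdist E a c + (m - j))" unfolding relpow_add by blast
    then have "m \<le> gdist E a c + (m - j)" using gdist_le m_def by blast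
    with lt assms(4) m_def show False by linarith
  qed
  ultimately show ?thesis using cn by auto
qed

lemma half_card:
  fixes Q :: "nat set"
  assumes "finite Q"
  shows "2 * card {(u,v). u \<in> Q \<and> v \<in> Q \<and> u < v} + card Q = card Q * card Q"
proof -
  define A where "A = {(u,v). u \<in> Q \<and> v \<in> Q \<and> u < v}"
  define B where "B = {(u,v). u \<in> Q \<and> v \<in> Q \<and> v < u}"
  define Dg where "Dg = (\<lambda>x. (x,x)) ` Q"
  have QQ: "Q \<times> Q = (A \<union> B) \<union> Dg" unfolding A_def B_def Dg_def by auto
  have fA: "finite A" "finite B" "finite Dg" using assms unfolding A_def B_def Dg_def
    by (auto intro: finite_subset[of _ "Q \<times> Q"])
  have "B = prod.swap ` A" unfolding A_def B_def by auto
  then have cB: "card B = card A" by (simp add: card_image)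
  have cD: "card Dg = card Q" unfolding Dg_def by (simp add: card_image inj_on_def)
  have "card (Q \<times> Q) = card (A \<union> B) + card Dg"
    unfolding QQ by (rule card_Un_disjoint) (use fA in \<open>auto simp: A_def B_def Dg_def\<close>)
  also have "card (A \<union> B) = card A + card B"
    by (rule card_Un_disjoint) (use fA in \<open>auto simp: A_def B_def\<close>)
  finally show ?thesis using cB cD A_def by (simp add: card_cartesian_product)
qed


lemma nat_amgm: "4 * (T::nat) * D \<le> (T + D)^2"
proof -
  have "int (4*T*D) \<le> int ((T+D)^2)"
    using zero_le_power2[of "int T - int D"] by (simp add: power2_eq_square algebra_simps)
  then show ?thesis by linarith
qed

lemma upper:
  assumes conn: "connected_graph n E"
  shows "32 * sigma2 n E \<le> n^4 + 96*n^3"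
proof (cases "n = 0")
  case True
  then show ?thesis by (simp add: sigma2_def)
next
  case False
  have sg: "simple_graph n E" using conn connected_graph_def by blast
  have Ex: "E u v \<Longrightarrow> u < n \<and> v < n \<and> u \<noteq> v \<and> E v u" for u v
    using sg unfolding simple_graph_def by blast
  define D where "D = Max (ecc n E ` {..<n})"
  have ecc_le: "u < n \<Longrightarrow> ecc n E u \<le> D" for u unfolding D_def by simp
  have "D \<in> ecc n E ` {..<n}" unfolding D_def by (rule Max_in) (use False in auto)
  then obtain a where a: "a < n" "ecc n E a = D" by auto
  have "{gdist E a v | v. v < n} = gdist E a ` {..<n}" by auto
  then have "ecc n E a = Max (gdist E a ` {..<n})" unfolding ecc_def by simp
  moreover have "Max (gdist E a ` {..<n}) \<in> gdist E a ` {..<n}" by (rule Max_in) (use False in auto)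
  ultimately obtain b where b: "b < n" "gdist E a b = D" using a by auto
  define p where "p j = (SOME c. c < n \<and> gdist E a c = j)" for j
  have p: "p j < n \<and> gdist E a (p j) = j" if "j \<le> D" for j
  proof -
    have "\<exists>c. c < n \<and> gdist E a c = j" using layer_nonempty[OF conn a(1) b(1)] b(2) that by auto
    then show ?thesis unfolding p_def by (rule someI_ex)
  qed
  define P where "P = p ` {..D}"
  have injp: "inj_on p {..D}" by (rule inj_onI) (metis p atMost_iff)
  have cP: "card P = D + 1" unfolding P_def using card_image[OF injp] by simp
  have Psub: "P \<subseteq> {..<n}" unfolding P_def using p by auto
  have Dn: "D + 1 \<le> n" using card_mono[OF _ Psub] cP by simp
  define Q where "Q = {..<n} - P"
  have cQ: "card Q = n - (D + 1)" unfolding Q_def using card_Diff_subset[OF _ Psub] cP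
    by (simp add: finite_subset[OF Psub])
  have nb: "card {q \<in> P. E x q} \<le> 3" if "x < n" for x
  proof -
    define d where "d = gdist E a x"
    have "{q \<in> P. E x q} \<subseteq> p ` {d - 1, d, d + 1}"
    proof
      fix q assume "q \<in> {q \<in> P. E x q}"
      then obtain j where j: "j \<le> D" "q = p j" "E x q" unfolding P_def by auto
      have "gdist E a q \<le> d + 1" using gdist_edge[OF conn a(1) that j(3)] d_def by simp
      moreover have "d \<le> gdist E a q + 1"
        using gdist_edge[OF conn a(1) _ Ex[OF j(3), THEN conjunct2, THEN conjunct2, THEN conjunct2]] j Ex[OF j(3)] d_def by simp
      moreover have "gdist E a q = j" using p j by simp
      ultimately have "j \<in> {d - 1, d, d + 1}" by auto
      then show "q \<in> p ` {d - 1, d, d + 1}" using j by auto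
    qed
    then have "card {q \<in> P. E x q} \<le> card (p ` {d - 1, d, d + 1})" by (rule card_mono[rotated]) simp
    also have "\<dots> \<le> card {d - 1, d, d + 1}" by (rule card_image_le) simp
    also have "\<dots> \<le> 3" by (simp add: card_insert_if)
    finally show ?thesis .
  qed
  define S where "S = {(u, v). u < v \<and> v < n \<and> E u v}"
  define S1 where "S1 = {(u,v). u \<in> Q \<and> v \<in> Q \<and> u < v}"
  define S2 where "S2 = {(u,v). (u,v) \<in> S \<and> (u \<in> P \<or> v \<in> P)}"
  define W where "W = Sigma {..<n} (\<lambda>x. {q \<in> P. E x q})"
  have finQ: "finite Q" unfolding Q_def by simp
  have finS1: "finite S1" unfolding S1_def using finQ
    by (auto intro: finite_subset[of _ "Q \<times> Q"])
  have finW: "finite W" unfolding W_def using finite_subset[OF Psub] by auto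
  have SS: "S \<subseteq> S1 \<union> S2" unfolding S_def S1_def S2_def Q_def using Ex by auto
  have c1: "2 * card S1 \<le> (n - (D+1))^2" using half_card[OF finQ] cQ unfolding S1_def
    by (simp add: power2_eq_square)
  define g where "g = (\<lambda>(u,v). if v \<in> P then (u,v) else (v,u))"
  have "inj_on g S2" unfolding g_def S2_def S_def by (auto simp: inj_on_def split: if_splits)
  moreover have "g ` S2 \<subseteq> W"
  proof
    fix y assume "y \<in> g ` S2"
    then obtain u v where uv: "(u,v) \<in> S2" "y = g (u,v)" by auto
    then have e: "E u v" "u \<in> P \<or> v \<in> P" unfolding S2_def S_def by auto
    show "y \<in> W"
    proof (cases "v \<in> P")
      case True then show ?thesis using uv e Ex[OF e(1)] unfolding g_def W_def by auto
    next
      case False then show ?thesis using uv e Ex[OF e(1)] unfolding g_def W_def by auto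
    qed
  qed
  ultimately have "card S2 \<le> card W" using card_inj_on_le finW by blast
  also have "card W = (\<Sum>x<n. card {q \<in> P. E x q})" unfolding W_def
    by (rule card_SigmaI) (use finite_subset[OF Psub] in auto)
  also have "\<dots> \<le> (\<Sum>x<n. 3)" by (rule sum_mono) (use nb in auto)
  finally have c2: "card S2 \<le> 3 * n" by simp
  have finS2: "finite S2" unfolding S2_def S_def
    by (rule finite_subset[of _ "{..<n} \<times> {..<n}"]) auto
  have "card S \<le> card (S1 \<union> S2)" by (rule card_mono) (use SS finS1 finS2 in auto)
  also have "\<dots> \<le> card S1 + card S2" by (rule card_Un_le)
  finally have cS: "card S \<le> card S1 + card S2" .
  have "sigma2 n E \<le> card S * (D * D)" unfolding sigma2_def S_def[symmetric]
    by (rule sum_bounded_above[where K="D*D", simplified])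
       (auto simp: S_def intro!: mult_mono ecc_le)
  then have "32 * sigma2 n E \<le> 32 * (card S1 + card S2) * (D * D)"
    using cS by (metis mult.assoc mult_le_mono1 mult_le_mono2 order_trans)
  also have "\<dots> = 16 * (2 * card S1) * (D*D) + 32 * card S2 * (D * D)" by (simp add: algebra_simps)
  also have "\<dots> \<le> 16 * (n - (D+1))^2 * (D*D) + 32 * (3*n) * (D*D)"
    using c1 c2 by (intro add_mono mult_le_mono) auto
  also have "\<dots> \<le> n^4 + 96 * n^3"
  proof (rule add_mono)
    define T where "T = n - (D+1)"
    have "4 * T * D \<le> (T + D)^2" by (rule nat_amgm)
    also have "\<dots> \<le> n^2" using Dn T_def by (intro power_mono) auto
    finally have "(4*T*D)^2 \<le> (n^2)^2" by (intro power_mono) auto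
    then show "16 * (n - (D+1))^2 * (D*D) \<le> n^4"
      unfolding T_def[symmetric] by (simp add: power2_eq_square power4_eq_xxxx algebra_simps)
    have "D * D \<le> n * n" using Dn by (intro mult_le_mono) auto
    then show "32 * (3*n) * (D*D) \<le> 96 * n^3" by (simp add: power3_eq_cube algebra_simps)
  qed
  finally show ?thesis .
qed


lemma M_ge:
  assumes "connected_graph n E"
  shows "sigma2 n E \<le> M n"
proof -
  have "{sigma2 n E | E. connected_graph n E} \<subseteq> {..n^4 + 96*n^3}" using upper by fastforce
  then have "finite {sigma2 n E | E. connected_graph n E}" using finite_subset by blast
  then show ?thesis unfolding M_def using assms by (intro Max_ge) auto
qed

lemma potential:
  assumes "\<And>x y. (x,y) \<in> R \<Longrightarrow> f y \<le> f x + (1::nat)"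
  shows "(x,y) \<in> R ^^ m \<Longrightarrow> f y \<le> f x + m"
proof (induction m arbitrary: y)
  case 0 then show ?case by simp
next
  case (Suc m)
  then obtain z where "(x,z) \<in> R ^^ m" "(z,y) \<in> R" by (meson relpow_Suc_E)
  then show ?case using Suc.IH assms by fastforce
qed

definition cg :: "nat \<Rightarrow> nat \<Rightarrow> nat \<Rightarrow> nat \<Rightarrow> bool" where
  "cg n k u v \<longleftrightarrow> u < n \<and> v < n \<and> u \<noteq> v \<and> (max u v < k \<or> u = v + 1 \<or> v = u + 1)"

lemma cg_conn: "connected_graph n (cg n k)"
proof -
  have sg: "simple_graph n (cg n k)" unfolding simple_graph_def cg_def by auto
  have r: "v < n \<Longrightarrow> (0,v) \<in> (adj_rel (cg n k))\<^sup>* \<and> (v,0) \<in> (adj_rel (cg n k))\<^sup>*" for v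
  proof (induction v)
    case 0 then show ?case by simp
  next
    case (Suc v)
    have "(v, Suc v) \<in> adj_rel (cg n k)" "(Suc v, v) \<in> adj_rel (cg n k)"
      using Suc.prems by (auto simp: adj_rel_def cg_def)
    then show ?case using Suc by (meson Suc_lessD rtrancl.rtrancl_into_rtrancl converse_rtrancl_into_rtrancl)
  qed
  show ?thesis unfolding connected_graph_def using sg r by (meson rtrancl_trans)
qed

lemma cg_ecc:
  assumes "u < k" "k \<le> n"
  shows "n - k \<le> ecc n (cg n k) u"
proof -
  define f where "f v = max v (k - 1)" for v
  have step: "(x,y) \<in> adj_rel (cg n k) \<Longrightarrow> f y \<le> f x + 1" for x y
    unfolding adj_rel_def cg_def f_def by auto
  have "(u, n-1) \<in> adj_rel (cg n k) ^^ gdist (cg n k) u (n-1)"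
    by (rule gdist_path[OF cg_conn]) (use assms in auto)
  from potential[OF step this] have "f (n-1) \<le> f u + gdist (cg n k) u (n-1)" .
  then have "n - k \<le> gdist (cg n k) u (n-1)" using assms unfolding f_def by auto
  also have "\<dots> \<le> ecc n (cg n k) u" unfolding ecc_def
  proof (rule Max_ge)
    have "{gdist (cg n k) u v |v. v < n} = gdist (cg n k) u ` {..<n}" by auto
    then show "finite {gdist (cg n k) u v |v. v < n}" by simp
    show "gdist (cg n k) u (n - 1) \<in> {gdist (cg n k) u v |v. v < n}" using assms by auto
  qed
  finally show ?thesis .
qed

lemma lower:
  assumes "k \<le> n"
  shows "(k * k - k) * (n-k)^2 \<le> 2 * M n"
proof -
  define S1 where "S1 = {(u,v). u \<in> {..<k} \<and> v \<in> {..<k} \<and> u < v}"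
  have c1: "2 * card S1 + k = k * k" using half_card[of "{..<k}"] unfolding S1_def by simp
  have "card S1 * (n-k)^2 \<le> (\<Sum>(u,v)\<in>S1. ecc n (cg n k) u * ecc n (cg n k) v)"
    by (rule sum_bounded_below[where K="(n-k)^2", simplified])
       (auto simp: S1_def power2_eq_square intro!: mult_mono cg_ecc assms)
  also have "\<dots> \<le> sigma2 n (cg n k)" unfolding sigma2_def
    by (rule sum_mono2) (use assms in \<open>auto simp: S1_def cg_def intro: finite_subset[of _ "{..<n} \<times> {..<n}"]\<close>)
  also have "\<dots> \<le> M n" by (rule M_ge[OF cg_conn])
  finally have "2 * card S1 * (n-k)^2 \<le> 2 * M n" by simp
  moreover have "2 * card S1 = k * k - k" using c1 by simp
  ultimately show ?thesis by simp
qed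

lemma M_le: "32 * M n \<le> n^4 + 96*n^3"
proof -
  define A where "A = {sigma2 n E | E. connected_graph n E}"
  have "A \<subseteq> {..n^4 + 96*n^3}" unfolding A_def using upper by fastforce
  then have fin: "finite A" using finite_subset by blast
  have "A \<noteq> {}" unfolding A_def using cg_conn[of n 0] by blast
  have "M n \<in> A" unfolding M_def A_def[symmetric] using fin \<open>A \<noteq> {}\<close> by (rule Max_in)
  then show ?thesis unfolding A_def using upper by auto
qed


lemma real_bound:
  fixes K N :: real
  assumes "N - 1 \<le> 2*K" "2*K \<le> N" "3 \<le> N"
  shows "N^4 - 4*N^3 \<le> 16 * (K*K - K) * (N - K)^2"
proof -
  have "(N-1)*(N-3) \<le> (2*K)*(2*K-2)" using assms by (intro mult_mono) auto
  moreover have "N^2 \<le> (2*N-2*K)^2" using assms by (intro power_mono) auto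
  ultimately have "(N-1)*(N-3)*N^2 \<le> (2*K)*(2*K-2)*(2*N-2*K)^2"
    using assms by (intro mult_mono) auto
  moreover have "N^4 - 4*N^3 \<le> (N-1)*(N-3)*N^2"
    by (simp add: power2_eq_square power3_eq_cube power4_eq_xxxx algebra_simps)
  ultimately show ?thesis by (simp add: power2_eq_square algebra_simps)
qed

theorem corollary2p12:
  shows "(\<lambda>n. real (M n) - real n ^ 4 / 32) \<in> O(\<lambda>n. real n ^ 3)"
proof (rule bigoI[where c=3])
  show "\<forall>\<^sub>F n in at_top. norm (real (M n) - real n ^ 4 / 32) \<le> 3 * norm (real n ^ 3)"
    using eventually_ge_at_top[of "3::nat"]
  proof eventually_elim
    case (elim n)
    define k where "k = n div 2"
    have k: "k \<le> n" "1 \<le> k" "n - 1 \<le> 2*k" "2*k \<le> n" using elim unfolding k_def by auto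
    have up: "real (32 * M n) \<le> real (n^4 + 96*n^3)" using M_le by (simp only: of_nat_le_iff)
    have lo: "real ((k * k - k) * (n-k)^2) \<le> real (2 * M n)" using lower[OF k(1)] by (simp only: of_nat_le_iff)
    have kk: "real (k*k - k) = real k * real k - real k" using k by (simp add: of_nat_diff)
    have rb: "real n ^4 - 4 * real n^3 \<le> 16 * (real k * real k - real k) * (real n - real k)^2"
      by (rule real_bound) (use k elim in auto)
    have "real n^4 - 4 * real n^3 \<le> 32 * real (M n)"
    proof -
      have lo': "(real k * real k - real k) * (real n - real k)^2 \<le> 2 * real (M n)"
        using lo kk k(1) by (simp add: of_nat_diff)
      have rb': "real n ^4 - 4 * real n^3 \<le> 16 * ((real k * real k - real k) * (real n - real k)^2)"
        using rb by (simp only: mult.assoc)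
      show ?thesis using lo' rb' by linarith
    qed
    moreover have "32 * real (M n) \<le> real n ^ 4 + 96 * real n ^3" using up by simp
    moreover have "0 \<le> real n ^ 3" by simp
    ultimately show ?case by (simp add: abs_le_iff)
  qed
qed

end
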